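(* For every integer $k\ge 0$, $$\varphi(2k):=\int_0^1t^{2k}\sqrt{1+t^2}\,\mathrm{d}t=\frac{(-1)^k}{4^k} \frac{\binom{2k}{k}}{k+1}\left(I(0)+\sqrt{2}\sum_{p=1}^k\frac{(-1)^p4^p}{\binom{2p}{p}}\right),$$ where $I(0)=\frac{\sqrt{2}}{2}+\frac{\ln(1+\sqrt{2})}{2}$. *)

theory Defs
  imports "HOL-Analysis.Analysis"
begin

end

theory Submission
  imports Defs
begin

lemma sq: "((\<lambda>t. sqrt (1 + t^2)) has_real_derivative x / sqrt (1 + x^2)) (at x within S)"
proof -
  have q: "((\<lambda>t. 1 + t^2) has_real_derivative 2 * x) (at x within S)"
    using DERIV_add[OF DERIV_const[of 1] DERIV_power[OF DERIV_ident, of 2]] by simp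
  have "((\<lambda>t. sqrt (1 + t^2)) has_real_derivative inverse (sqrt (1+x^2)) / 2 * (2 * x)) (at x within S)"
    by (rule DERIV_chain2[OF DERIV_real_sqrt q]) (simp add: add_pos_nonneg)
  then show ?thesis by (simp add: field_simps)
qed
lemma sq1: "((\<lambda>t. 1 + t^2) has_real_derivative 2 * x) (at x within S)"
    using DERIV_add[OF DERIV_const[of 1] DERIV_power[OF DERIV_ident, of 2]] by simp
lemma dbase: "((\<lambda>t. (t * sqrt (1 + t^2) + ln (t + sqrt (1 + t^2))) / 2) has_real_derivative sqrt (1 + x^2)) (at x within {0..1})"
proof -
    let ?s = "sqrt (1 + x^2)"
    have s: "?s > 0" by (simp add: add_pos_nonneg)
    have p: "x + ?s > 0"
    proof -
      have "\<bar>x\<bar> < ?s"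
        using real_sqrt_abs[of x] real_sqrt_less_iff[of "x^2" "1+x^2"] by simp
      then show ?thesis by linarith
    qed
    have A: "((\<lambda>t. t + sqrt (1 + t^2)) has_real_derivative 1 + x / ?s) (at x within {0..1})"
      by (rule DERIV_add[OF DERIV_ident sq])
    have B: "((\<lambda>t. ln (t + sqrt (1 + t^2))) has_real_derivative inverse (x + ?s) * (1 + x / ?s)) (at x within {0..1})"
      by (rule DERIV_chain2[OF DERIV_ln[OF p] A])
    have C: "((\<lambda>t. t * sqrt (1 + t^2)) has_real_derivative 1 * ?s + x / ?s * x) (at x within {0..1})"
      by (rule DERIV_mult[OF DERIV_ident sq])
    have D: "((\<lambda>t. (t * sqrt (1 + t^2) + ln (t + sqrt (1 + t^2))) / 2) has_real_derivative (1 * ?s + x / ?s * x + inverse (x + ?s) * (1 + x / ?s)) / 2) (at x within {0..1})"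
      by (rule DERIV_cdivide[OF DERIV_add[OF C B]])
    have ss: "?s * ?s = 1 + x^2" using real_sqrt_pow2[of "1+x^2"] by (simp add: power2_eq_square)
    have e1: "inverse (x + ?s) * (1 + x / ?s) = 1 / ?s" using s p by (simp add: field_simps)
    have "(1 * ?s + x / ?s * x + inverse (x + ?s) * (1 + x / ?s)) / 2 = (?s * ?s + x * x + 1) / ?s / 2"
      unfolding e1 using s by (simp add: field_simps)
    also have "\<dots> = ?s" unfolding ss using s by (simp add: field_simps power2_eq_square)
    finally have eq: "(1 * ?s + x / ?s * x + inverse (x + ?s) * (1 + x / ?s)) / 2 = ?s" .
    show ?thesis using D unfolding eq .
qed
lemma drec: "((\<lambda>t. t^(n+1) * (1 + t^2) * sqrt (1 + t^2)) has_real_derivative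
     real (n+1) * (x ^ n * sqrt (1 + x^2)) + real (n+4) * (x ^ (n+2) * sqrt (1 + x^2))) (at x within {0..1})"
  proof -
    let ?s = "sqrt (1 + x^2)"
    have s: "?s > 0" by (simp add: add_pos_nonneg)
    have D: "((\<lambda>t. t^(n+1) * (1 + t^2) * sqrt (1 + t^2)) has_real_derivative
      ((of_nat (n+1) * (1 * x ^ (n + 1 - Suc 0))) * (1 + x^2) + 2 * x * x^(n+1)) * ?s + x / ?s * (x^(n+1) * (1 + x^2))) (at x within {0..1})"
      by (rule DERIV_mult[OF DERIV_mult[OF DERIV_power[OF DERIV_ident] sq1] sq])
    have ss: "1 + x^2 = ?s * ?s" using real_sqrt_pow2[of "1+x^2"] by (simp add: power2_eq_square)
    have e: "x / ?s * (x^(n+1) * (1 + x^2)) = x^(n+2) * ?s"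
        using s by (subst ss) (simp add: field_simps power2_eq_square)
    have "((of_nat (n+1) * (1 * x ^ (n + 1 - Suc 0))) * (1 + x^2) + 2 * x * x^(n+1)) * ?s + x / ?s * (x^(n+1) * (1 + x^2))
       = real (n+1) * (x ^ n * ?s) + real (n+4) * (x ^ (n+2) * ?s)"
      unfolding e by (simp add: algebra_simps power2_eq_square)
    then show ?thesis using D by metis
  qed
lemma int_base:
  "((\<lambda>t::real. sqrt (1 + t^2)) has_integral (sqrt 2 / 2 + ln (1 + sqrt 2) / 2)) {0..1}"
proof -
  have "((\<lambda>t. sqrt (1 + t^2)) has_integral
     ((1 * sqrt (1 + 1^2) + ln (1 + sqrt (1 + 1^2))) / 2 - (0 * sqrt (1 + 0^2) + ln (0 + sqrt (1 + 0^2))) / 2)) {0..1::real}"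
    apply (rule fundamental_theorem_of_calculus[where f="\<lambda>t. (t * sqrt (1 + t^2) + ln (t + sqrt (1 + t^2))) / 2"])
     apply simp
    apply (subst has_real_derivative_iff_has_vector_derivative[symmetric])
    apply (rule dbase)
    done
  then show ?thesis by (simp add: add_divide_distrib)
qed

definition phi :: "nat \<Rightarrow> real" where
  "phi n = integral {0..1} (\<lambda>t::real. t ^ n * sqrt (1 + t^2))"

lemma phi_int: "((\<lambda>t::real. t ^ n * sqrt (1 + t^2)) has_integral phi n) {0..1}"
  unfolding phi_def
  by (intro integrable_integral integrable_continuous_interval continuous_intros)

lemma phi_rec: "real (n+1) * phi n + real (n+4) * phi (n+2) = 2 * sqrt 2"
proof -
  have h1: "((\<lambda>x. real (n+1) * (x ^ n * sqrt (1 + x^2)) + real (n+4) * (x ^ (n+2) * sqrt (1 + x^2))) has_integral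
     (1^(n+1) * (1 + 1^2) * sqrt (1 + 1^2) - 0^(n+1) * (1 + 0^2) * sqrt (1 + 0^2))) {0..1::real}"
    apply (rule fundamental_theorem_of_calculus[where f="\<lambda>t. t^(n+1) * (1 + t^2) * sqrt (1 + t^2)"])
     apply simp
    apply (subst has_real_derivative_iff_has_vector_derivative[symmetric])
    apply (rule drec)
    done
  have h2: "((\<lambda>x. real (n+1) * (x ^ n * sqrt (1 + x^2)) + real (n+4) * (x ^ (n+2) * sqrt (1 + x^2))) has_integral
     real (n+1) * phi n + real (n+4) * phi (n+2)) {0..1::real}"
    by (intro has_integral_add has_integral_mult_right phi_int)
  have "real (n+1) * phi n + real (n+4) * phi (n+2) = (1^(n+1) * (1 + 1^2) * sqrt (1 + 1^2) - 0^(n+1) * (1 + 0^2) * sqrt (1 + 0^2))"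
    by (rule has_integral_unique[OF h2 h1])
  also have "\<dots> = 2 * sqrt 2" by simp
  finally show ?thesis .
qed

lemma nat_helper:
  fixes A B C D k :: nat
  assumes 1: "Suc (Suc (2*k)) * A = C * Suc k" and 2: "D = A" and 3: "Suc (2*k) * B = D * Suc k"
  shows "C * Suc k = 2 * (2*k+1) * B"
proof -
  have "C * Suc k = 2 * (D * Suc k)" using 1 2 by (simp add: algebra_simps)
  also have "\<dots> = 2 * (Suc (2*k) * B)" using 3 by simp
  finally show ?thesis by simp
qed

lemma binom_rec: "real ((2*(k+1)) choose (k+1)) * (real k + 1) = 2 * (2 * real k + 1) * real ((2*k) choose k)"
proof -
  have c: "(Suc (2*k) choose Suc k) = (Suc (2*k) choose k)"
    using binomial_symmetric[of k "Suc (2*k)"] by simp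
  have h: "(Suc (Suc (2*k)) choose Suc k) * Suc k = 2 * (2*k+1) * ((2*k) choose k)"
    by (rule nat_helper[OF Suc_times_binomial_eq c Suc_times_binomial_eq])
  have e: "2*(k+1) = Suc (Suc (2*k))" "k+1 = Suc k" by simp_all
  have e2: "2 * Suc k = Suc (Suc (2*k))" by simp
  have "((2*(k+1)) choose (k+1)) * (k+1) = 2 * (2*k+1) * ((2*k) choose k)"
    unfolding e(2) e2 using h by metis
  then have "real (((2*(k+1)) choose (k+1)) * (k+1)) = real (2 * (2*k+1) * ((2*k) choose k))" by (simp only:)
  then show ?thesis by (simp only: of_nat_mult of_nat_add of_nat_numeral of_nat_1)
qed

lemma step_alg:
  fixes a q B B' S P X kk :: real
  assumes a2: "a * a = 1" and q: "q > 0" and B: "B > 0" and k: "kk \<ge> 0"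
    and br: "B' * (kk+1) = 2 * (2*kk+1) * B"
    and P: "P = a / q * (B / (kk+1)) * S"
  shows "(2 * sqrt 2 - (2*kk+1) * P) / (2*kk+4)
     = (-a) / (4*q) * (B' / (kk+2)) * (S + sqrt 2 * ((-a) * (4*q) / B'))"
proof -
  have B': "B' = 2 * (2*kk+1) * B / (kk+1)" using br k by (simp add: field_simps)
  have B'pos: "B' > 0" unfolding B' using B k by simp
  have nz: "kk+1 \<noteq> 0" "kk+2 \<noteq> 0" "q \<noteq> 0" using k q by auto
  have c0: "(-a) / (4*q) * (B' / (kk+2)) = - (2*kk+1) / (2*(kk+2)) * (a / q * (B / (kk+1)))"
  proof -
    have "(-a) / (4*q) * ((2 * (2*kk+1) * B / (kk+1)) / (kk+2)) = - (a * (2*kk+1) * B) / (2 * q * (kk+1) * (kk+2))"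
      using nz by (simp add: divide_simps) (simp add: algebra_simps)
    also have "\<dots> = - (2*kk+1) / (2*(kk+2)) * (a / q * (B / (kk+1)))"
      using nz by (simp add: divide_simps) (simp add: algebra_simps)
    finally show ?thesis unfolding B' .
  qed
  have c: "(-a) / (4*q) * (B' / (kk+2)) = - (2*kk+1) / (2*kk+4) * (a / q * (B / (kk+1)))"
    unfolding c0 by (simp add: algebra_simps)
  have x: "(-a) / (4*q) * (B' / (kk+2)) * (sqrt 2 * ((-a) * (4*q) / B')) = 2 * sqrt 2 / (2*kk+4)"
  proof -
    have "(-a) / (4*q) * (B' / (kk+2)) * (sqrt 2 * ((-a) * (4*q) / B')) = (a*a) * sqrt 2 / (kk+2)"
      using nz B'pos by (simp add: divide_simps)
    also have "\<dots> = 2 * sqrt 2 / (2*kk+4)" using a2 k by (simp add: field_simps)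
    finally show ?thesis .
  qed
  have "(-a) / (4*q) * (B' / (kk+2)) * (S + sqrt 2 * ((-a) * (4*q) / B'))
     = (-a) / (4*q) * (B' / (kk+2)) * S + (-a) / (4*q) * (B' / (kk+2)) * (sqrt 2 * ((-a) * (4*q) / B'))"
    by (rule distrib_left)
  also have "\<dots> = - (2*kk+1) / (2*kk+4) * P + 2 * sqrt 2 / (2*kk+4)"
    unfolding x unfolding c P by (simp only: mult.assoc)
  also have "\<dots> = (2 * sqrt 2 - (2*kk+1) * P) / (2*kk+4)"
    proof -
      have n4: "2*kk+4 \<noteq> 0" using k by simp
      show ?thesis using n4 by (simp add: divide_simps) (simp add: algebra_simps)
    qed
  finally show ?thesis by simp
qed

theorem theorem3p0p3:
  fixes k :: nat
  shows "integral {0..1} (\<lambda>t::real. t ^ (2*k) * sqrt (1 + t^2))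
    = (-1) ^ k / 4 ^ k * (real ((2*k) choose k) / real (k + 1))
      * ((sqrt 2 / 2 + ln (1 + sqrt 2) / 2)
         + sqrt 2 * (\<Sum>p=1..k. (-1) ^ p * 4 ^ p / real ((2*p) choose p)))"
proof -
  have "phi (2*k) = (-1) ^ k / 4 ^ k * (real ((2*k) choose k) / real (k + 1))
      * ((sqrt 2 / 2 + ln (1 + sqrt 2) / 2)
         + sqrt 2 * (\<Sum>p=1..k. (-1) ^ p * 4 ^ p / real ((2*p) choose p)))"
  proof (induction k)
    case 0
    have "phi 0 = sqrt 2 / 2 + ln (1 + sqrt 2) / 2"
      using has_integral_unique[OF phi_int[of 0]] int_base by simp
    then show ?case by simp
  next
    case (Suc k)
    let ?S = "(sqrt 2 / 2 + ln (1 + sqrt 2) / 2) + sqrt 2 * (\<Sum>p=1..k. (-1) ^ p * 4 ^ p / real ((2*p) choose p))"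
    let ?B = "real ((2*k) choose k)"
    let ?B' = "real ((2*Suc k) choose (Suc k))"
    have rec: "real (2*k+1) * phi (2*k) + real (2*k+4) * phi (2*Suc k) = 2 * sqrt 2"
      using phi_rec[of "2*k"] by (simp add: algebra_simps)
    have br: "?B' * (real k+1) = 2 * (2*real k+1) * ?B" using binom_rec[of k] by (simp only: Suc_eq_plus1[symmetric])
    have Bpos: "?B > 0" by simp
    have sum: "(\<Sum>p=1..Suc k. (-1) ^ p * 4 ^ p / real ((2*p) choose p)) =
       (\<Sum>p=1..k. (-1) ^ p * 4 ^ p / real ((2*p) choose p)) + (-1)^(Suc k) * 4^(Suc k) / ?B'"
      by (simp only: sum.cl_ivl_Suc) simp
    have a2: "((-1::real)^k) * ((-1)^k) = 1" by (simp flip: power_add)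
    have P: "phi (2*k) = (-1::real)^k / 4^k * (?B / (real k+1)) * ?S" using Suc.IH by simp
    have "phi (2*Suc k) = (2 * sqrt 2 - (2*real k+1) * phi (2*k)) / (2*real k+4)"
      using rec by (simp add: field_simps)
    also have "\<dots> = (-((-1)^k)) / (4*4^k) * (?B' / (real k+2)) * (?S + sqrt 2 * ((-((-1)^k)) * (4*4^k) / ?B'))"
      by (rule step_alg[OF a2 _ Bpos _ br P]) simp_all
    also have "\<dots> = (-1) ^ Suc k / 4 ^ Suc k * (?B' / real (Suc k + 1))
      * (?S + sqrt 2 * ((-1)^(Suc k) * 4^(Suc k) / ?B'))"
      by (simp add: add.commute)
    finally have "phi (2*Suc k) = (-1) ^ Suc k / 4 ^ Suc k * (?B' / real (Suc k + 1))
      * (?S + sqrt 2 * ((-1)^(Suc k) * 4^(Suc k) / ?B'))" .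
    then show ?case unfolding sum by (simp only: distrib_left add.assoc)
  qed
  then show ?thesis by (simp add: phi_def)
qed

end
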